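(* For every $3\times 3$ bimatrix game $(A,B)$: if $(A,B)$ has a unique Nash equilibrium and it lies in the interior of $\Sigma_A\times\Sigma_B$, then the transition diagram of $(A,B)$ has no dominated row or column, i.e. for all $\{i,i',i''\}=\{j,j',j''\}=\{1,2,3\}$, $(i,j)\to(i',j)$ and $(i,j')\to(i',j')$ imply $(i',j'')\to(i,j'')$, and $(i,j)\to(i,j')$ and $(i',j)\to(i',j')$ imply $(i'',j')\to(i'',j)$.
   Context: $\Sigma_A$ is the set of probability row vectors and $\Sigma_B$ the set of probability column vectors in $\mathbb{R}^3$. For $A=(a_{ij})$, $B=(b_{ij})\in\mathbb{R}^{3\times3}$, $\mathrm{BR}_A(q)=\operatorname{argmax}_{p\in\Sigma_A} pAq$, $\mathrm{BR}_B(p)=\operatorname{argmax}_{q\in\Sigma_B} pBq$; a Nash equilibrium is $(\bar p,\bar q)$ with $\bar p\in\mathrm{BR}_A(\bar q)$, $\bar q\in \mathrm{BR}_B(\bar p)$. The transition relation on cells $(i,j)$, $i,j\in\{1,2,3\}$, is: for $i\neq i'$, $(i,j)\to(i',j)$ iff $a_{i'j}\ge a_{ij}$; for $j\neq j'$, $(i,j)\to(i,j')$ iff $b_{ij'}\ge b_{ij}$. *)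

theory Defs
  imports "HOL-Analysis.Analysis"
begin

definition simplex3 :: "(real^3) set" where
  "simplex3 = {p. (\<forall>i. 0 \<le> p $ i) \<and> (\<Sum>i\<in>UNIV. p $ i) = 1}"

definition payoff :: "real^3 \<Rightarrow> real^3^3 \<Rightarrow> real^3 \<Rightarrow> real" where
  "payoff p M q = (\<Sum>i\<in>UNIV. \<Sum>j\<in>UNIV. p $ i * M $ i $ j * q $ j)"

definition BR_A :: "real^3^3 \<Rightarrow> real^3 \<Rightarrow> (real^3) set" where
  "BR_A A q = {p \<in> simplex3. \<forall>p'\<in>simplex3. payoff p' A q \<le> payoff p A q}"

definition BR_B :: "real^3^3 \<Rightarrow> real^3 \<Rightarrow> (real^3) set" where
  "BR_B B p = {q \<in> simplex3. \<forall>q'\<in>simplex3. payoff p B q' \<le> payoff p B q}"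

definition nash_eq :: "real^3^3 \<Rightarrow> real^3^3 \<Rightarrow> real^3 \<Rightarrow> real^3 \<Rightarrow> bool" where
  "nash_eq A B p q \<longleftrightarrow> p \<in> BR_A A q \<and> q \<in> BR_B B p"

definition trans_rel :: "real^3^3 \<Rightarrow> real^3^3 \<Rightarrow> 3 \<times> 3 \<Rightarrow> 3 \<times> 3 \<Rightarrow> bool" where
  "trans_rel A B c d \<longleftrightarrow>
     (case c of (i, j) \<Rightarrow> case d of (i', j') \<Rightarrow>
        (i \<noteq> i' \<and> j = j' \<and> A $ i $ j \<le> A $ i' $ j) \<or>
        (i = i' \<and> j \<noteq> j' \<and> B $ i $ j \<le> B $ i $ j'))"

end

theory Submission
  imports Defs
begin

lemma payoff_rows: "payoff p M q = (\<Sum>m\<in>UNIV. p $ m * (\<Sum>j\<in>UNIV. M $ m $ j * q $ j))"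
  unfolding payoff_def by (simp add: sum_distrib_left mult.assoc)

lemma payoff_cols: "payoff p M q = (\<Sum>j\<in>UNIV. (\<Sum>m\<in>UNIV. p $ m * M $ m $ j) * q $ j)"
  unfolding payoff_def
  apply (subst sum.swap)
  apply (simp add: sum_distrib_right)
  done

lemma shift_simplex:
  fixes p :: "real^3"
  assumes "p \<in> simplex3" "k \<noteq> i"
  defines "p' \<equiv> (\<chi> m. p $ m + p $ i * ((if m = k then 1 else 0) - (if m = i then 1 else 0)))"
  shows "p' \<in> simplex3"
    and "\<And>r. (\<Sum>m\<in>UNIV. p' $ m * r m) = (\<Sum>m\<in>UNIV. p $ m * r m) + p $ i * (r k - r i)"
proof -
  have nn: "\<forall>m. 0 \<le> p $ m" and s1: "(\<Sum>m\<in>UNIV. p $ m) = 1" using assms(1) unfolding simplex3_def by auto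
  have "\<forall>m. 0 \<le> p' $ m"
    using nn assms(2) unfolding p'_def by (auto intro: add_nonneg_nonneg)
  moreover have "(\<Sum>m\<in>UNIV. p' $ m) = 1"
    unfolding p'_def using s1 by (simp add: sum.distrib sum_subtractf sum_distrib_left[symmetric] right_diff_distrib)
  ultimately show "p' \<in> simplex3" unfolding simplex3_def by auto
  show "(\<Sum>m\<in>UNIV. p' $ m * r m) = (\<Sum>m\<in>UNIV. p $ m * r m) + p $ i * (r k - r i)" for r
  proof -
    have e: "p' $ m * r m = p $ m * r m + p $ i * ((if m = k then r m else 0) - (if m = i then r m else 0))" for m
      unfolding p'_def by (simp add: algebra_simps)
    show ?thesis unfolding e by (simp add: sum.distrib sum_subtractf sum_distrib_left[symmetric])
  qed
qed

lemma BR_A_support: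
  assumes "p \<in> BR_A A q" "0 < p $ i"
  shows "(\<Sum>j\<in>UNIV. A $ k $ j * q $ j) \<le> (\<Sum>j\<in>UNIV. A $ i $ j * q $ j)"
proof (cases "k = i")
  case False
  define r where "r m = (\<Sum>j\<in>UNIV. A $ m $ j * q $ j)" for m
  define p' where "p' = (\<chi> m. p $ m + p $ i * ((if m = k then 1 else 0) - (if m = i then 1 else 0)))"
  have ps: "p \<in> simplex3" and br: "\<forall>p'\<in>simplex3. payoff p' A q \<le> payoff p A q"
    using assms(1) unfolding BR_A_def by auto
  have "p' \<in> simplex3" using shift_simplex(1)[OF ps False] unfolding p'_def .
  hence "payoff p' A q \<le> payoff p A q" using br by auto
  moreover have "payoff p' A q = payoff p A q + p $ i * (r k - r i)"
    unfolding payoff_rows r_def[symmetric] p'_def using shift_simplex(2)[OF ps False] by simp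
  ultimately have "p $ i * (r k - r i) \<le> 0" by simp
  with assms(2) have "r k \<le> r i" by (simp add: mult_le_0_iff)
  thus ?thesis unfolding r_def .
qed simp

lemma BR_B_support:
  assumes "q \<in> BR_B B p" "0 < q $ j"
  shows "(\<Sum>m\<in>UNIV. p $ m * B $ m $ k) \<le> (\<Sum>m\<in>UNIV. p $ m * B $ m $ j)"
proof (cases "k = j")
  case False
  define c where "c l = (\<Sum>m\<in>UNIV. p $ m * B $ m $ l)" for l
  define q' where "q' = (\<chi> m. q $ m + q $ j * ((if m = k then 1 else 0) - (if m = j then 1 else 0)))"
  have qs: "q \<in> simplex3" and br: "\<forall>q'\<in>simplex3. payoff p B q' \<le> payoff p B q"
    using assms(1) unfolding BR_B_def by auto
  have "q' \<in> simplex3" using shift_simplex(1)[OF qs False] unfolding q'_def .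
  hence "payoff p B q' \<le> payoff p B q" using br by auto
  moreover have "payoff p B q' = payoff p B q + q $ j * (c k - c j)"
    unfolding payoff_cols c_def[symmetric] q'_def using shift_simplex(2)[OF qs False, of "\<lambda>l. c l"]
    by (simp add: mult.commute)
  ultimately have "q $ j * (c k - c j) \<le> 0" by simp
  with assms(2) have "c k \<le> c j" by (simp add: mult_le_0_iff)
  thus ?thesis unfolding c_def .
qed simp

lemma univ3:
  fixes a b c :: 3
  assumes "a \<noteq> b" "a \<noteq> c" "b \<noteq> c"
  shows "UNIV = {a, b, c}"
proof -
  have "card {a,b,c} = CARD(3)" using assms by simp
  thus ?thesis using card_subset_eq[of UNIV "{a,b,c}"] by auto
qed

theorem mainTheorem2:
  fixes A B :: "real^3^3"
  assumes uniq: "\<exists>!pq. nash_eq A B (fst pq) (snd pq)"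
    and interior: "\<forall>p q. nash_eq A B p q \<longrightarrow> (\<forall>i. 0 < p $ i) \<and> (\<forall>j. 0 < q $ j)"
  shows "\<forall>i i' i'' j j' j'' :: 3.
           i \<noteq> i' \<and> i \<noteq> i'' \<and> i' \<noteq> i'' \<and> j \<noteq> j' \<and> j \<noteq> j'' \<and> j' \<noteq> j'' \<longrightarrow>
           (trans_rel A B (i, j) (i', j) \<and> trans_rel A B (i, j') (i', j')
              \<longrightarrow> trans_rel A B (i', j'') (i, j'')) \<and>
           (trans_rel A B (i, j) (i, j') \<and> trans_rel A B (i', j) (i', j')
              \<longrightarrow> trans_rel A B (i'', j') (i'', j))"
proof (intro allI impI conjI)
  obtain p q where ne: "nash_eq A B p q" using uniq by auto
  have pp: "\<And>i. 0 < p $ i" and qp: "\<And>j. 0 < q $ j" using interior ne by auto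
  have bra: "p \<in> BR_A A q" and brb: "q \<in> BR_B B p" using ne unfolding nash_eq_def by auto
  fix i i' i'' j j' j'' :: 3
  assume d: "i \<noteq> i' \<and> i \<noteq> i'' \<and> i' \<noteq> i'' \<and> j \<noteq> j' \<and> j \<noteq> j'' \<and> j' \<noteq> j''"
  have UJ: "UNIV = {j, j', j''}" using d univ3 by blast
  have UI: "UNIV = {i, i', i''}" using d univ3 by blast
  {
    assume h: "trans_rel A B (i, j) (i', j) \<and> trans_rel A B (i, j') (i', j')"
    hence h1: "A $ i $ j \<le> A $ i' $ j" "A $ i $ j' \<le> A $ i' $ j'" using d unfolding trans_rel_def by auto
    show "trans_rel A B (i', j'') (i, j'')"
    proof (rule ccontr)
      assume "\<not> ?thesis"
      hence lt: "A $ i $ j'' < A $ i' $ j''" using d unfolding trans_rel_def by auto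
      have le: "(\<Sum>l\<in>UNIV. A $ i' $ l * q $ l) \<le> (\<Sum>l\<in>UNIV. A $ i $ l * q $ l)"
        using BR_A_support[OF bra pp] .
      have "A $ i $ j * q $ j \<le> A $ i' $ j * q $ j" using h1 qp by (simp add: mult_right_mono less_imp_le)
      moreover have "A $ i $ j' * q $ j' \<le> A $ i' $ j' * q $ j'" using h1 qp by (simp add: mult_right_mono less_imp_le)
      moreover have "A $ i $ j'' * q $ j'' < A $ i' $ j'' * q $ j''" using lt qp by simp
      ultimately show False using le d unfolding UJ by simp
    qed
  }
  {
    assume h: "trans_rel A B (i, j) (i, j') \<and> trans_rel A B (i', j) (i', j')"
    hence h1: "B $ i $ j \<le> B $ i $ j'" "B $ i' $ j \<le> B $ i' $ j'" using d unfolding trans_rel_def by auto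
    show "trans_rel A B (i'', j') (i'', j)"
    proof (rule ccontr)
      assume "\<not> ?thesis"
      hence lt: "B $ i'' $ j < B $ i'' $ j'" using d unfolding trans_rel_def by auto
      have le: "(\<Sum>m\<in>UNIV. p $ m * B $ m $ j') \<le> (\<Sum>m\<in>UNIV. p $ m * B $ m $ j)"
        using BR_B_support[OF brb qp] .
      have "p $ i * B $ i $ j \<le> p $ i * B $ i $ j'" using h1 pp by (simp add: mult_left_mono less_imp_le)
      moreover have "p $ i' * B $ i' $ j \<le> p $ i' * B $ i' $ j'" using h1 pp by (simp add: mult_left_mono less_imp_le)
      moreover have "p $ i'' * B $ i'' $ j < p $ i'' * B $ i'' $ j'" using lt pp by simp
      ultimately show False using le d unfolding UI by simp
    qed
  }
qed

end
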